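(* Let $A$ be such that $\mathfrak{g}=\mathfrak{g}(A)$ is finite dimensional and fix $i\in\{1,\dots,\theta\}$. If $\beta\in\varDelta^A_{+,j}$ for some $j\in\{1,\dots,p\}$ (i.e. $\beta$ is an $\alpha_i$-string generator), then $M_\beta$ is contained in the Lie subalgebra (in $\mathsf{Rep}(\boldsymbol\alpha_p)$) of $(\mathfrak{g}',e_i)$ generated by the submodules $M_{\alpha_k}$, $k\neq i$.
   Context: $\Bbbk$ algebraically closed of characteristic $p>0$; $A=(a_{jk})\in\Bbbk^{\theta\times\theta}$ with $a_{jj}\in\{0,2\}$ and $a_{jk}=0$ iff $a_{kj}=0$ ($j\ne k$). $\mathfrak{g}(A)$ is the contragredient Lie algebra generated by a Cartan subalgebra $\mathfrak{h}$ (with $\xi_k\in\mathfrak{h}^*$, $h_j\in\mathfrak{h}$, $\xi_k(h_j)=a_{jk}$) and $e_j,f_j$ subject to $[h,h']=0$, $[h,e_j]=\xi_j(h)e_j$, $[h,f_j]=-\xi_j(h)f_j$, $[e_j,f_k]=\delta_{jk}h_j$, modulo the largest graded ideal meeting $\mathfrak{h}$ trivially; $\mathbb{Z}^\theta$-graded with $\deg e_j=\alpha_j$. $\varDelta^A_+=\{\beta\in\mathbb{N}_0^\theta\setminus0:\mathfrak{g}_\beta\neq0\}$; in the finite-dimensional case each root space is one-dimensional, spanned by a fixed $e_\beta$. $\mathfrak{g}'=[\mathfrak{g},\mathfrak{g}]$, and $(\mathfrak{g}',e_i)$ denotes $\mathfrak{g}'$ as a Lie algebra in $\mathsf{Rep}(\boldsymbol\alpha_p)$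 (modules over $\Bbbk[t]/(t^p)$, $t$ primitive) with $t$ acting by $\operatorname{ad}e_i$. For $j\in\{1,\dots,p\}$, $\varDelta^A_{+,j}$ is the set of $\beta\ne\alpha_i$ with $\beta+k\alpha_i\in\varDelta^A_+$ for $0\le k<j$ and $\beta-\alpha_i,\beta+j\alpha_i\notin\varDelta^A_+$; for such $\beta$, $M_\beta=\bigoplus_{k=0}^{j-1}\Bbbk e_{\beta+k\alpha_i}$ (an $\operatorname{ad}e_i$-stable subspace). For $k\ne i$, $\alpha_k$ lies in some $\varDelta^A_{+,j}$. *)

theory Defs
  imports Main "HOL-Library.Function_Algebras" "HOL-Computational_Algebra.Polynomial"
begin

definition alg_closed_field :: "'k::field itself \<Rightarrow> bool" where
  "alg_closed_field _ \<longleftrightarrow> (\<forall>q :: 'k poly. degree q > 0 \<longrightarrow> (\<exists>x. poly q x = 0))"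

section \<open>Degrees in Z^theta (indices = the finite type 'i)\<close>

definition simple_root :: "'i \<Rightarrow> ('i \<Rightarrow> int)" where
  "simple_root j = (\<lambda>k. if k = j then 1 else 0)"

definition deg_add :: "('i \<Rightarrow> int) \<Rightarrow> ('i \<Rightarrow> int) \<Rightarrow> ('i \<Rightarrow> int)" where
  "deg_add \<beta> \<gamma> = (\<lambda>k. \<beta> k + \<gamma> k)"

definition deg_smul :: "int \<Rightarrow> ('i \<Rightarrow> int) \<Rightarrow> ('i \<Rightarrow> int)" where
  "deg_smul n \<beta> = (\<lambda>k. n * \<beta> k)"

definition lie_algebra :: "('k::field \<Rightarrow> 'g::ab_group_add \<Rightarrow> 'g) \<Rightarrow> ('g \<Rightarrow> 'g \<Rightarrow> 'g) \<Rightarrow> bool" where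
  "lie_algebra s b \<longleftrightarrow> vector_space s
     \<and> (\<forall>x y z. b (x + y) z = b x z + b y z)
     \<and> (\<forall>x y z. b x (y + z) = b x y + b x z)
     \<and> (\<forall>c x y. b (s c x) y = s c (b x y))
     \<and> (\<forall>c x y. b x (s c y) = s c (b x y))
     \<and> (\<forall>x. b x x = 0)
     \<and> (\<forall>x y z. b x (b y z) + b y (b z x) + b z (b x y) = 0)"

definition lie_closed :: "('g \<Rightarrow> 'g \<Rightarrow> 'g) \<Rightarrow> 'g set \<Rightarrow> bool" where
  "lie_closed b S \<longleftrightarrow> (\<forall>x\<in>S. \<forall>y\<in>S. b x y \<in> S)"

definition derived_alg :: "('k::field \<Rightarrow> 'g::ab_group_add \<Rightarrow> 'g) \<Rightarrow> ('g \<Rightarrow> 'g \<Rightarrow> 'g) \<Rightarrow> 'g set" where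
  "derived_alg s b = module.span s {b x y | x y. True}"

text \<open>Lie subalgebra of (g', t) in Rep(alpha_p), t acting by ad t0, generated by X:
  smallest subspace of g' closed under the bracket and stable under ad t0 containing X.\<close>
definition rep_subalg_gen ::
  "('k::field \<Rightarrow> 'g::ab_group_add \<Rightarrow> 'g) \<Rightarrow> ('g \<Rightarrow> 'g \<Rightarrow> 'g) \<Rightarrow> 'g \<Rightarrow> 'g set \<Rightarrow> 'g set" where
  "rep_subalg_gen s b t0 X = \<Inter>{S. S \<subseteq> derived_alg s b \<and> module.subspace s S \<and> lie_closed b S
        \<and> (\<forall>x\<in>S. b t0 x \<in> S) \<and> X \<subseteq> S}"

definition mat_rank :: "('i \<Rightarrow> 'i \<Rightarrow> 'k::field) \<Rightarrow> nat" where
  "mat_rank A = vector_space.dim (\<lambda>c (v::'i \<Rightarrow> 'k) k. c * v k) (range A)"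

definition admissible_matrix :: "('i::finite \<Rightarrow> 'i \<Rightarrow> 'k::field) \<Rightarrow> bool" where
  "admissible_matrix A \<longleftrightarrow> (\<forall>j. A j j = 0 \<or> A j j = 2)
     \<and> (\<forall>j k. j \<noteq> k \<longrightarrow> (A j k = 0 \<longleftrightarrow> A k j = 0))"

definition lie_grading :: "('k::field \<Rightarrow> 'g::ab_group_add \<Rightarrow> 'g) \<Rightarrow> ('g \<Rightarrow> 'g \<Rightarrow> 'g)
     \<Rightarrow> (('i \<Rightarrow> int) \<Rightarrow> 'g set) \<Rightarrow> bool" where
  "lie_grading s b G \<longleftrightarrow> (\<forall>\<beta>. module.subspace s (G \<beta>))
     \<and> (\<forall>x. \<exists>!c. finite {\<beta>. c \<beta> \<noteq> 0} \<and> (\<forall>\<beta>. c \<beta> \<in> G \<beta>) \<and> x = (\<Sum>\<beta>\<in>{\<beta>. c \<beta> \<noteq> 0}. c \<beta>))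
     \<and> (\<forall>\<beta> \<gamma> x y. x \<in> G \<beta> \<longrightarrow> y \<in> G \<gamma> \<longrightarrow> b x y \<in> G (deg_add \<beta> \<gamma>))"

definition graded_ideal :: "('k::field \<Rightarrow> 'g::ab_group_add \<Rightarrow> 'g) \<Rightarrow> ('g \<Rightarrow> 'g \<Rightarrow> 'g)
     \<Rightarrow> (('i \<Rightarrow> int) \<Rightarrow> 'g set) \<Rightarrow> 'g set \<Rightarrow> bool" where
  "graded_ideal s b G I \<longleftrightarrow> module.subspace s I \<and> (\<forall>x y. y \<in> I \<longrightarrow> b x y \<in> I)
     \<and> I \<subseteq> module.span s (\<Union>\<beta>. I \<inter> G \<beta>)"

text \<open>(s, b) together with the data (H, hh, xi, e, f, G) is the contragredient Lie algebra g(A):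
  H with hh, xi is a (minimal) realization of A, the defining relations hold, the algebra is
  generated by H and the e_j, f_j, it is Z^theta-graded with deg e_j = alpha_j, deg f_j = - alpha_j,
  deg H = 0, and no nonzero graded ideal meets H trivially (i.e. the largest such ideal has been
  factored out).\<close>
definition is_contragredient ::
  "('i::finite \<Rightarrow> 'i \<Rightarrow> 'k::field) \<Rightarrow> ('k \<Rightarrow> 'g::ab_group_add \<Rightarrow> 'g) \<Rightarrow> ('g \<Rightarrow> 'g \<Rightarrow> 'g)
   \<Rightarrow> 'g set \<Rightarrow> ('i \<Rightarrow> 'g) \<Rightarrow> ('i \<Rightarrow> 'g \<Rightarrow> 'k) \<Rightarrow> ('i \<Rightarrow> 'g) \<Rightarrow> ('i \<Rightarrow> 'g)
   \<Rightarrow> (('i \<Rightarrow> int) \<Rightarrow> 'g set) \<Rightarrow> bool" where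
  "is_contragredient A s b H hh xi e f G \<longleftrightarrow>
     lie_algebra s b
     \<comment> \<open>realization\<close>
     \<and> module.subspace s H
     \<and> vector_space.dim s H = 2 * card (UNIV :: 'i set) - mat_rank A
     \<and> (\<forall>j. hh j \<in> H) \<and> module.independent s (range hh) \<and> inj hh
     \<and> (\<forall>k. \<forall>x\<in>H. \<forall>y\<in>H. \<forall>c. xi k (x + y) = xi k x + xi k y \<and> xi k (s c x) = c * xi k x)
     \<and> (\<forall>c :: 'i \<Rightarrow> 'k. (\<forall>x\<in>H. (\<Sum>k\<in>UNIV. c k * xi k x) = 0) \<longrightarrow> (\<forall>k. c k = 0))
     \<and> (\<forall>j k. xi k (hh j) = A j k)
     \<comment> \<open>defining relations\<close>
     \<and> (\<forall>x\<in>H. \<forall>y\<in>H. b x y = 0)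
     \<and> (\<forall>x\<in>H. \<forall>j. b x (e j) = s (xi j x) (e j))
     \<and> (\<forall>x\<in>H. \<forall>j. b x (f j) = s (- xi j x) (f j))
     \<and> (\<forall>j k. b (e j) (f k) = (if j = k then hh j else 0))
     \<comment> \<open>generation\<close>
     \<and> (\<forall>S. module.subspace s S \<and> lie_closed b S \<and> H \<subseteq> S \<and> range e \<subseteq> S \<and> range f \<subseteq> S
            \<longrightarrow> S = UNIV)
     \<comment> \<open>grading\<close>
     \<and> lie_grading s b G
     \<and> H \<subseteq> G (\<lambda>_. 0)
     \<and> (\<forall>j. e j \<in> G (simple_root j) \<and> f j \<in> G (deg_smul (-1) (simple_root j)))
     \<comment> \<open>the largest graded ideal meeting H trivially has been factored out\<close>
     \<and> (\<forall>I. graded_ideal s b G I \<and> I \<inter> H = {0} \<longrightarrow> I = {0})"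

definition fin_dim :: "('k::field \<Rightarrow> 'g::ab_group_add \<Rightarrow> 'g) \<Rightarrow> bool" where
  "fin_dim s \<longleftrightarrow> (\<exists>B. finite B \<and> module.span s B = UNIV)"

definition pos_roots :: "(('i \<Rightarrow> int) \<Rightarrow> 'g::zero set) \<Rightarrow> ('i \<Rightarrow> int) set" where
  "pos_roots G = {\<beta>. (\<forall>k. \<beta> k \<ge> 0) \<and> \<beta> \<noteq> (\<lambda>_. 0) \<and> G \<beta> \<noteq> {0}}"

text \<open>Delta^A_{+,j} relative to the fixed simple index i.\<close>
definition string_gen :: "(('i \<Rightarrow> int) \<Rightarrow> 'g::zero set) \<Rightarrow> 'i \<Rightarrow> nat \<Rightarrow> ('i \<Rightarrow> int) set" where
  "string_gen G i j = {\<beta>. \<beta> \<noteq> simple_root i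
       \<and> (\<forall>k<j. deg_add \<beta> (deg_smul (int k) (simple_root i)) \<in> pos_roots G)
       \<and> deg_add \<beta> (deg_smul (-1) (simple_root i)) \<notin> pos_roots G
       \<and> deg_add \<beta> (deg_smul (int j) (simple_root i)) \<notin> pos_roots G}"

text \<open>M_beta = sum of the root spaces g_{beta + k alpha_i}, 0 <= k < j (each one-dimensional).\<close>
definition M_sub :: "('k::field \<Rightarrow> 'g::ab_group_add \<Rightarrow> 'g) \<Rightarrow> (('i \<Rightarrow> int) \<Rightarrow> 'g set)
     \<Rightarrow> 'i \<Rightarrow> ('i \<Rightarrow> int) \<Rightarrow> nat \<Rightarrow> 'g set" where
  "M_sub s G i \<beta> j = module.span s (\<Union>k<j. G (deg_add \<beta> (deg_smul (int k) (simple_root i))))"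

end

theory Submission
  imports Defs
begin


inductive cld :: "('g \<Rightarrow> 'g \<Rightarrow> 'g) \<Rightarrow> ('i \<Rightarrow> 'g) \<Rightarrow> ('i \<Rightarrow> 'i \<Rightarrow> int)
    \<Rightarrow> ('g \<times> ('i \<Rightarrow> int)) set \<Rightarrow> 'g \<Rightarrow> ('i \<Rightarrow> int) \<Rightarrow> bool"
  for bb E dg X where
  base: "(x,d) \<in> X \<Longrightarrow> cld bb E dg X x d"
| step: "cld bb E dg X v \<delta> \<Longrightarrow> cld bb E dg X (bb (E m) v) (deg_add (dg m) \<delta>)"

definition cls where "cls bb E dg X = {x. \<exists>d. cld bb E dg X x d}"

locale lie = vector_space s for s :: "'k::field \<Rightarrow> 'g::ab_group_add \<Rightarrow> 'g" +
  fixes b :: "'g \<Rightarrow> 'g \<Rightarrow> 'g"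
  assumes la: "lie_algebra s b"
begin

lemma addL: "b (x + y) z = b x z + b y z" using la unfolding lie_algebra_def by blast
lemma addR: "b x (y + z) = b x y + b x z" using la unfolding lie_algebra_def by blast
lemma scL: "b (s c x) y = s c (b x y)" using la unfolding lie_algebra_def by blast
lemma scR: "b x (s c y) = s c (b x y)" using la unfolding lie_algebra_def by blast
lemma alt: "b x x = 0" using la unfolding lie_algebra_def by blast
lemma jac: "b x (b y z) + b y (b z x) + b z (b x y) = 0" using la unfolding lie_algebra_def by blast

lemma zeroL[simp]: "b 0 y = 0"
  using addL[of 0 0 y] by simp
lemma zeroR[simp]: "b x 0 = 0"
  using addR[of x 0 0] by simp
lemma negL: "b (- x) y = - b x y"
  using addL[of x "-x" y] by (simp add: add_eq_0_iff)
lemma negR: "b x (- y) = - b x y"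
  using addR[of x y "-y"] by (simp add: add_eq_0_iff)
lemma diffL: "b (x - y) z = b x z - b y z"
  using addL[of x "-y" z] negL by simp
lemma diffR: "b x (y - z) = b x y - b x z"
  using addR[of x y "-z"] negR by simp
lemma anti: "b x y = - b y x"
proof -
  have "b x x + b y x + (b x y + b y y) = 0" using alt[of "x+y"] by (simp only: addL addR)
  then have "b x y + b y x = 0" by (simp add: alt algebra_simps)
  then show ?thesis by (simp add: eq_neg_iff_add_eq_0)
qed
lemma jac2: "b x (b y z) = b (b x y) z + b y (b x z)"
proof -
  have "b x (b y z) + b y (b z x) + b z (b x y) = 0" by (rule jac)
  moreover have "b y (b z x) = - b y (b x z)" by (subst anti[of z x]) (simp add: negR)
  moreover have "b z (b x y) = - b (b x y) z" by (rule anti)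
  ultimately show ?thesis by (simp add: algebra_simps eq_neg_iff_add_eq_0)
qed
lemma jac3: "b (b x y) z = b x (b y z) - b y (b x z)"
  using jac2[of x y z] by (simp add: algebra_simps)

lemma sumR: "finite F \<Longrightarrow> b x (sum g F) = (\<Sum>a\<in>F. b x (g a))"
  by (induct F rule: finite_induct) (simp_all add: addR)

lemma span_adR:
  assumes "subspace W" "\<And>u. u \<in> X \<Longrightarrow> b y u \<in> W" "u \<in> span X"
  shows "b y u \<in> W"
  using assms(3)
proof (induct rule: span_induct_alt)
  case base then show ?case using assms(1) subspace_0 by simp
next
  case (step c x z)
  then show ?case using assms by (simp add: addR scR subspace_add subspace_scale)
qed

lemma span_adL:
  assumes "subspace W" "\<And>u. u \<in> X \<Longrightarrow> b u y \<in> W" "u \<in> span X"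
  shows "b u y \<in> W"
  using assms(3)
proof (induct rule: span_induct_alt)
  case base then show ?case using assms(1) subspace_0 by simp
next
  case (step c x z)
  then show ?case using assms by (simp add: addL scL subspace_add subspace_scale)
qed


lemma G1:
  assumes "\<And>n. \<exists>c. b h (E n) = s c (E n)" "\<And>x \<delta>. (x,\<delta>)\<in>X \<Longrightarrow> \<exists>c. b h x = s c x"
    and "cld b E dg X v \<delta>"
  shows "\<exists>c. b h v = s c v"
  using assms(3)
proof (induct rule: cld.induct)
  case (base x d)
  then show ?case using assms(2) by auto
next
  case (step v \<delta> m)
  then obtain c where c: "b h v = s c v" by blast
  obtain c' where c': "b h (E m) = s c' (E m)" using assms(1) by blast
  have "b h (b (E m) v) = b (b h (E m)) v + b (E m) (b h v)" by (rule jac2)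
  also have "\<dots> = s (c' + c) (b (E m) v)" by (simp add: c c' scL scR scale_left_distrib)
  finally show ?case by blast
qed

lemma G2:
  assumes Hsub: "subspace H"
    and A1: "\<And>x \<delta> m. (x,\<delta>)\<in>X \<Longrightarrow> b (F m) x \<in> span (cls b E dg X \<union> Z)"
    and A2: "\<And>n z. z\<in>Z \<Longrightarrow> b (E n) z \<in> span (cls b E dg X \<union> Z)"
    and A3: "\<And>m n. b (F m) (E n) \<in> H"
    and A4: "\<And>h n. h\<in>H \<Longrightarrow> \<exists>c. b h (E n) = s c (E n)"
    and A5: "\<And>h x \<delta>. h\<in>H \<Longrightarrow> (x,\<delta>)\<in>X \<Longrightarrow> \<exists>c. b h x = s c x"
    and "cld b E dg X v \<delta>"
  shows "b (F m) v \<in> span (cls b E dg X \<union> Z)"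
  using assms(7)
proof (induct arbitrary: m rule: cld.induct)
  case (base x d)
  then show ?case using A1 by auto
next
  case (step v \<delta> n)
  let ?W = "span (cls b E dg X \<union> Z)"
  have "b (F m) (b (E n) v) = b (b (F m) (E n)) v + b (E n) (b (F m) v)" by (rule jac2)
  moreover have "b (b (F m) (E n)) v \<in> ?W"
  proof -
    obtain c where "b (b (F m) (E n)) v = s c v"
      using G1[of "b (F m) (E n)" E X dg v \<delta>] A3 A4 A5 step(1) by blast
    moreover have "v \<in> ?W" using step(1) by (intro span_base) (auto simp: cls_def)
    ultimately show ?thesis by (simp add: span_scale)
  qed
  moreover have "b (E n) (b (F m) v) \<in> ?W"
  proof (rule span_adR[OF subspace_span _ step(2)])
    fix u assume "u \<in> cls b E dg X \<union> Z"
    then show "b (E n) u \<in> ?W"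
    proof
      assume "u \<in> cls b E dg X"
      then obtain d where "cld b E dg X u d" by (auto simp: cls_def)
      then have "cld b E dg X (b (E n) u) (deg_add (dg n) d)" by (rule cld.step)
      then show ?thesis by (intro span_base) (auto simp: cls_def)
    next
      assume "u \<in> Z" then show ?thesis by (rule A2)
    qed
  qed
  ultimately show ?case by (simp add: span_add)
qed

end

locale contra = lie s b for s :: "'k::field \<Rightarrow> 'g::ab_group_add \<Rightarrow> 'g" and b +
  fixes A :: "'i::finite \<Rightarrow> 'i \<Rightarrow> 'k" and H :: "'g set" and hh :: "'i \<Rightarrow> 'g"
    and xi :: "'i \<Rightarrow> 'g \<Rightarrow> 'k" and e f :: "'i \<Rightarrow> 'g" and G :: "('i \<Rightarrow> int) \<Rightarrow> 'g set"
  assumes ic: "is_contragredient A s b H hh xi e f G"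
begin

lemmas icd = ic[unfolded is_contragredient_def]
lemma Hsub: "subspace H" using icd[THEN conjunct2, THEN conjunct1] by blast
lemma hhH: "hh j \<in> H" using icd[THEN conjunct2, THEN conjunct2, THEN conjunct2, THEN conjunct1] by blast
lemma hh_indep: "independent (range hh)" using icd[THEN conjunct2, THEN conjunct2, THEN conjunct2, THEN conjunct2, THEN conjunct1] by blast
lemma hh_nz: "hh j \<noteq> 0" using hh_indep dependent_zero by force
lemma xi_hh: "xi k (hh j) = A j k" using icd[THEN conjunct2, THEN conjunct2, THEN conjunct2, THEN conjunct2, THEN conjunct2, THEN conjunct2, THEN conjunct2, THEN conjunct2, THEN conjunct1] by blast
lemma HH: "x \<in> H \<Longrightarrow> y \<in> H \<Longrightarrow> b x y = 0" using icd[THEN conjunct2, THEN conjunct2, THEN conjunct2, THEN conjunct2, THEN conjunct2, THEN conjunct2, THEN conjunct2, THEN conjunct2, THEN conjunct2, THEN conjunct1] by blast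
lemma He: "x \<in> H \<Longrightarrow> b x (e j) = s (xi j x) (e j)" using icd[THEN conjunct2, THEN conjunct2, THEN conjunct2, THEN conjunct2, THEN conjunct2, THEN conjunct2, THEN conjunct2, THEN conjunct2, THEN conjunct2, THEN conjunct2, THEN conjunct1] by blast
lemma Hf: "x \<in> H \<Longrightarrow> b x (f j) = s (- xi j x) (f j)" using icd[THEN conjunct2, THEN conjunct2, THEN conjunct2, THEN conjunct2, THEN conjunct2, THEN conjunct2, THEN conjunct2, THEN conjunct2, THEN conjunct2, THEN conjunct2, THEN conjunct2, THEN conjunct1] by blast
lemma ef: "b (e j) (f k) = (if j = k then hh j else 0)" using icd[THEN conjunct2, THEN conjunct2, THEN conjunct2, THEN conjunct2, THEN conjunct2, THEN conjunct2, THEN conjunct2, THEN conjunct2, THEN conjunct2, THEN conjunct2, THEN conjunct2, THEN conjunct2, THEN conjunct1] by blast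
lemma gen: "subspace S \<Longrightarrow> lie_closed b S \<Longrightarrow> H \<subseteq> S \<Longrightarrow> range e \<subseteq> S \<Longrightarrow> range f \<subseteq> S \<Longrightarrow> S = UNIV"
  using icd[THEN conjunct2, THEN conjunct2, THEN conjunct2, THEN conjunct2, THEN conjunct2, THEN conjunct2, THEN conjunct2, THEN conjunct2, THEN conjunct2, THEN conjunct2, THEN conjunct2, THEN conjunct2, THEN conjunct2, THEN conjunct1] by blast
lemma grading: "lie_grading s b G" using icd[THEN conjunct2, THEN conjunct2, THEN conjunct2, THEN conjunct2, THEN conjunct2, THEN conjunct2, THEN conjunct2, THEN conjunct2, THEN conjunct2, THEN conjunct2, THEN conjunct2, THEN conjunct2, THEN conjunct2, THEN conjunct2, THEN conjunct1] by blast
lemma HG0: "H \<subseteq> G (\<lambda>_. 0)" using icd[THEN conjunct2, THEN conjunct2, THEN conjunct2, THEN conjunct2, THEN conjunct2, THEN conjunct2, THEN conjunct2, THEN conjunct2, THEN conjunct2, THEN conjunct2, THEN conjunct2, THEN conjunct2, THEN conjunct2, THEN conjunct2, THEN conjunct2, THEN conjunct1] by blast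
lemma eG: "e j \<in> G (simple_root j)" using icd[THEN conjunct2, THEN conjunct2, THEN conjunct2, THEN conjunct2, THEN conjunct2, THEN conjunct2, THEN conjunct2, THEN conjunct2, THEN conjunct2, THEN conjunct2, THEN conjunct2, THEN conjunct2, THEN conjunct2, THEN conjunct2, THEN conjunct2, THEN conjunct2, THEN conjunct1] by blast
lemma fG: "f j \<in> G (deg_smul (-1) (simple_root j))" using icd[THEN conjunct2, THEN conjunct2, THEN conjunct2, THEN conjunct2, THEN conjunct2, THEN conjunct2, THEN conjunct2, THEN conjunct2, THEN conjunct2, THEN conjunct2, THEN conjunct2, THEN conjunct2, THEN conjunct2, THEN conjunct2, THEN conjunct2, THEN conjunct2] by blast
lemma maxideal: "graded_ideal s b G I \<Longrightarrow> I \<inter> H = {0} \<Longrightarrow> I = {0}"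
  using icd[THEN conjunct2, THEN conjunct2, THEN conjunct2, THEN conjunct2, THEN conjunct2, THEN conjunct2, THEN conjunct2, THEN conjunct2, THEN conjunct2, THEN conjunct2, THEN conjunct2, THEN conjunct2, THEN conjunct2, THEN conjunct2, THEN conjunct2, THEN conjunct2, THEN conjunct2] by blast

lemma Gsub: "subspace (G \<beta>)" using grading[unfolded lie_grading_def, THEN conjunct1] by (rule spec)
lemma Guniq: "\<exists>!c. finite {\<beta>. c \<beta> \<noteq> 0} \<and> (\<forall>\<beta>. c \<beta> \<in> G \<beta>) \<and> x = (\<Sum>\<beta>\<in>{\<beta>. c \<beta> \<noteq> 0}. c \<beta>)"
  using grading[unfolded lie_grading_def, THEN conjunct2, THEN conjunct1] by (rule spec)
lemma Gbr: "x \<in> G \<beta> \<Longrightarrow> y \<in> G \<gamma> \<Longrightarrow> b x y \<in> G (deg_add \<beta> \<gamma>)"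
  using grading[unfolded lie_grading_def, THEN conjunct2, THEN conjunct2] by blast

lemma grade_zero:
  assumes r: "r \<in> G \<gamma>" and rs: "r \<in> span (\<Union>\<delta>\<in>P. G \<delta>)" and g: "\<gamma> \<notin> P"
  shows "r = 0"
proof -
  define Q where "Q = {y. \<exists>c. finite {\<delta>. c \<delta> \<noteq> 0} \<and> (\<forall>\<delta>. c \<delta> \<in> G \<delta>) \<and> c \<gamma> = 0
     \<and> y = (\<Sum>\<delta>\<in>{\<delta>. c \<delta> \<noteq> 0}. c \<delta>)}"
  have sQ: "subspace Q"
    unfolding subspace_def
  proof (intro conjI allI impI ballI)
    show "0 \<in> Q" unfolding Q_def by (rule CollectI, rule exI[of _ "\<lambda>_. 0"]) (simp add: subspace_0[OF Gsub])
  next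
    fix x y assume "x \<in> Q" "y \<in> Q"
    then obtain c1 c2 where c1: "finite {\<delta>. c1 \<delta> \<noteq> 0}" "\<forall>\<delta>. c1 \<delta> \<in> G \<delta>" "c1 \<gamma> = 0"
        "x = (\<Sum>\<delta>\<in>{\<delta>. c1 \<delta> \<noteq> 0}. c1 \<delta>)"
      and c2: "finite {\<delta>. c2 \<delta> \<noteq> 0}" "\<forall>\<delta>. c2 \<delta> \<in> G \<delta>" "c2 \<gamma> = 0"
        "y = (\<Sum>\<delta>\<in>{\<delta>. c2 \<delta> \<noteq> 0}. c2 \<delta>)"
      unfolding Q_def by blast
    define S where "S = {\<delta>. c1 \<delta> \<noteq> 0} \<union> {\<delta>. c2 \<delta> \<noteq> 0}"
    have fS: "finite S" using c1 c2 S_def by simp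
    define c where "c = (\<lambda>\<delta>. c1 \<delta> + c2 \<delta>)"
    have sub: "{\<delta>. c \<delta> \<noteq> 0} \<subseteq> S" unfolding S_def c_def by auto
    have "x = (\<Sum>\<delta>\<in>S. c1 \<delta>)"
    proof -
      have "(\<Sum>\<delta>\<in>{\<delta>. c1 \<delta> \<noteq> 0}. c1 \<delta>) = (\<Sum>\<delta>\<in>S. c1 \<delta>)"
        using fS by (intro sum.mono_neutral_left) (auto simp: S_def)
      then show ?thesis using c1(4) by simp
    qed
    moreover have "y = (\<Sum>\<delta>\<in>S. c2 \<delta>)"
    proof -
      have "(\<Sum>\<delta>\<in>{\<delta>. c2 \<delta> \<noteq> 0}. c2 \<delta>) = (\<Sum>\<delta>\<in>S. c2 \<delta>)"
        using fS by (intro sum.mono_neutral_left) (auto simp: S_def)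
      then show ?thesis using c2(4) by simp
    qed
    moreover have "(\<Sum>\<delta>\<in>S. c \<delta>) = (\<Sum>\<delta>\<in>{\<delta>. c \<delta> \<noteq> 0}. c \<delta>)"
      using sub fS by (intro sum.mono_neutral_right) auto
    ultimately have "x + y = (\<Sum>\<delta>\<in>{\<delta>. c \<delta> \<noteq> 0}. c \<delta>)"
      by (simp add: c_def sum.distrib)
    moreover have "finite {\<delta>. c \<delta> \<noteq> 0}" using sub fS finite_subset by blast
    moreover have "\<forall>\<delta>. c \<delta> \<in> G \<delta>" using c1 c2 by (simp add: c_def subspace_add[OF Gsub])
    moreover have "c \<gamma> = 0" using c1 c2 by (simp add: c_def)
    ultimately show "x + y \<in> Q" unfolding Q_def by blast
  next
    fix a x assume "x \<in> Q"
    then obtain c1 where c1: "finite {\<delta>. c1 \<delta> \<noteq> 0}" "\<forall>\<delta>. c1 \<delta> \<in> G \<delta>" "c1 \<gamma> = 0"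
        "x = (\<Sum>\<delta>\<in>{\<delta>. c1 \<delta> \<noteq> 0}. c1 \<delta>)"
      unfolding Q_def by blast
    define c where "c = (\<lambda>\<delta>. s a (c1 \<delta>))"
    have sub: "{\<delta>. c \<delta> \<noteq> 0} \<subseteq> {\<delta>. c1 \<delta> \<noteq> 0}" unfolding c_def by auto
    have "s a x = (\<Sum>\<delta>\<in>{\<delta>. c1 \<delta> \<noteq> 0}. c \<delta>)" by (simp add: c1(4) c_def scale_sum_right)
    also have "\<dots> = (\<Sum>\<delta>\<in>{\<delta>. c \<delta> \<noteq> 0}. c \<delta>)"
      using sub c1(1) by (intro sum.mono_neutral_right) auto
    finally have "s a x = (\<Sum>\<delta>\<in>{\<delta>. c \<delta> \<noteq> 0}. c \<delta>)" .
    moreover have "finite {\<delta>. c \<delta> \<noteq> 0}" using sub c1(1) finite_subset by blast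
    moreover have "\<forall>\<delta>. c \<delta> \<in> G \<delta>" using c1 by (simp add: c_def subspace_scale[OF Gsub])
    moreover have "c \<gamma> = 0" using c1 by (simp add: c_def)
    ultimately show "s a x \<in> Q" unfolding Q_def by blast
  qed
  have single: "y \<in> G \<delta> \<Longrightarrow> y = (\<Sum>\<eta>\<in>{\<eta>. (\<lambda>\<eta>. if \<eta> = \<delta> then y else 0) \<eta> \<noteq> 0}. (\<lambda>\<eta>. if \<eta> = \<delta> then y else 0) \<eta>)
      \<and> finite {\<eta>. (\<lambda>\<eta>. if \<eta> = \<delta> then y else 0) \<eta> \<noteq> 0}
      \<and> (\<forall>\<eta>. (\<lambda>\<eta>. if \<eta> = \<delta> then y else 0) \<eta> \<in> G \<eta>)" for y \<delta>
  proof -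
    assume y: "y \<in> G \<delta>"
    have "{\<eta>. (if \<eta> = \<delta> then y else 0) \<noteq> 0} = (if y = 0 then {} else {\<delta>})" by auto
    then show ?thesis using y by (auto simp: subspace_0[OF Gsub])
  qed
  have "(\<Union>\<delta>\<in>P. G \<delta>) \<subseteq> Q"
  proof
    fix y assume "y \<in> (\<Union>\<delta>\<in>P. G \<delta>)"
    then obtain \<delta> where d: "\<delta> \<in> P" "y \<in> G \<delta>" by blast
    then have "\<delta> \<noteq> \<gamma>" using g by auto
    then show "y \<in> Q" unfolding Q_def using single[OF d(2)]
      by (intro CollectI exI[of _ "\<lambda>\<eta>. if \<eta> = \<delta> then y else 0"]) auto
  qed
  then have "r \<in> Q" using span_minimal[OF _ sQ] rs by blast
  then obtain c where c: "finite {\<delta>. c \<delta> \<noteq> 0}" "\<forall>\<delta>. c \<delta> \<in> G \<delta>" "c \<gamma> = 0"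
        "r = (\<Sum>\<delta>\<in>{\<delta>. c \<delta> \<noteq> 0}. c \<delta>)" unfolding Q_def by blast
  obtain c0 where c0: "\<forall>y. (finite {\<beta>. y \<beta> \<noteq> 0} \<and> (\<forall>\<beta>. y \<beta> \<in> G \<beta>) \<and> r = (\<Sum>\<beta>\<in>{\<beta>. y \<beta> \<noteq> 0}. y \<beta>)) \<longrightarrow> y = c0"
    using Guniq[of r] by (elim ex1E) blast
  have "c = c0" using spec[OF c0, of c] c by blast
  moreover have "(\<lambda>\<eta>. if \<eta> = \<gamma> then r else 0) = c0" using spec[OF c0, of "\<lambda>\<eta>. if \<eta> = \<gamma> then r else 0"] single[OF r] by blast
  ultimately have "c \<gamma> = r" by auto
  then show "r = 0" using c(3) by simp
qed



lemma ad_all: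
  assumes W: "subspace W" and gW: "\<And>y w. y \<in> H \<union> range e \<union> range f \<Longrightarrow> w \<in> W \<Longrightarrow> b y w \<in> W"
    and w: "w \<in> W"
  shows "b y w \<in> W"
proof -
  define T where "T = {y. \<forall>w\<in>W. b y w \<in> W}"
  have "subspace T" unfolding subspace_def T_def
    using W by (auto simp: addL scL subspace_0 subspace_add subspace_scale)
  moreover have "lie_closed b T" unfolding lie_closed_def T_def
    using W by (auto simp: jac3 subspace_diff)
  moreover have "H \<subseteq> T" "range e \<subseteq> T" "range f \<subseteq> T" unfolding T_def using gW by auto
  ultimately have "T = UNIV" using gen by blast
  then show ?thesis using w unfolding T_def by blast
qed

definition "Xe = range (\<lambda>m. (e m, simple_root m))"
definition "Xf = range (\<lambda>m. (f m, deg_smul (-1) (simple_root m)))"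
definition "dgf = (\<lambda>m. deg_smul (-1) (simple_root m))"
definition "POS = cls b e simple_root Xe"
definition "NEG = cls b f dgf Xf"

lemma cld_deg:
  assumes "\<And>x d. (x,d) \<in> X \<Longrightarrow> x \<in> G d" "\<And>m. E m \<in> G (dg m)" "cld b E dg X v \<delta>"
  shows "v \<in> G \<delta>"
  using assms(3) by (induct rule: cld.induct) (auto intro: assms(1,2) Gbr)

lemma cld_prop:
  assumes "\<And>x d. (x,d) \<in> X \<Longrightarrow> Q d" "\<And>m d. Q d \<Longrightarrow> Q (deg_add (dg m) d)" "cld bb E dg X v \<delta>"
  shows "Q \<delta>"
  using assms(3) by (induct rule: cld.induct) (auto intro: assms(1,2))

lemma posH: "h \<in> H \<Longrightarrow> cld b e simple_root Xe v \<delta> \<Longrightarrow> \<exists>c. b h v = s c v"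
  by (rule G1[of h e Xe]) (auto simp: Xe_def He)

lemma negH: "h \<in> H \<Longrightarrow> cld b f dgf Xf v \<delta> \<Longrightarrow> \<exists>c. b h v = s c v"
proof -
  assume h: "h \<in> H" and c: "cld b f dgf Xf v \<delta>"
  have "b h (f n) = s (- xi n h) (f n)" for n using Hf[OF h] .
  then have 1: "\<exists>c. b h (f n) = s c (f n)" for n by blast
  show ?thesis by (rule G1[of h f Xf, OF 1 _ c]) (auto simp: Xf_def 1)
qed

lemma ef_H: "b (e m) (f n) \<in> H"
  by (simp add: ef hhH subspace_0[OF Hsub])
lemma fe_H: "b (f m) (e n) \<in> H"
  using ef_H[of n m] by (subst anti) (simp add: subspace_neg[OF Hsub])

lemma e_neg: "cld b f dgf Xf v \<delta> \<Longrightarrow> b (e m) v \<in> span (NEG \<union> H)"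
  unfolding NEG_def
proof (rule G2[OF Hsub, of Xf e f dgf H])
  fix x d m assume "(x,d) \<in> Xf"
  then have "b (e m) x \<in> H" using ef_H by (auto simp: Xf_def)
  then show "b (e m) x \<in> span (cls b f dgf Xf \<union> H)" by (intro span_base) blast
next
  fix n z assume z: "z \<in> H"
  have "f n \<in> cls b f dgf Xf" unfolding cls_def Xf_def dgf_def by (auto intro: cld.base)
  then have "f n \<in> span (cls b f dgf Xf \<union> H)" by (intro span_base) blast
  moreover have "b (f n) z = s (xi n z) (f n)" by (subst anti) (simp add: Hf[OF z])
  ultimately show "b (f n) z \<in> span (cls b f dgf Xf \<union> H)" by (simp add: span_scale)
next
  show "b (e m) (f n) \<in> H" for m n by (rule ef_H)
next
  show "\<exists>c. b h (f n) = s c (f n)" if "h \<in> H" for h n using Hf[OF that] by blast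
next
  show "\<exists>c. b h x = s c x" if "h \<in> H" "(x,d) \<in> Xf" for h x d
  proof -
    from that obtain m where "x = f m" by (auto simp: Xf_def)
    then show ?thesis using Hf[OF that(1), of m] by blast
  qed
qed

lemma f_pos: "cld b e simple_root Xe v \<delta> \<Longrightarrow> b (f m) v \<in> span (POS \<union> H)"
  unfolding POS_def
proof (rule G2[OF Hsub, of Xe f e simple_root H])
  fix x d m assume "(x,d) \<in> Xe"
  then have "b (f m) x \<in> H" using fe_H by (auto simp: Xe_def)
  then show "b (f m) x \<in> span (cls b e simple_root Xe \<union> H)" by (intro span_base) blast
next
  fix n z assume z: "z \<in> H"
  have "e n \<in> cls b e simple_root Xe" unfolding cls_def Xe_def by (auto intro: cld.base)
  then have "e n \<in> span (cls b e simple_root Xe \<union> H)" by (intro span_base) blast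
  moreover have "b (e n) z = s (- xi n z) (e n)" by (subst anti) (simp add: He[OF z])
  ultimately show "b (e n) z \<in> span (cls b e simple_root Xe \<union> H)" by (simp add: span_scale span_neg)
next
  show "b (f m) (e n) \<in> H" for m n by (rule fe_H)
next
  show "\<exists>c. b h (e n) = s c (e n)" if "h \<in> H" for h n using He[OF that] by blast
next
  show "\<exists>c. b h x = s c x" if "h \<in> H" "(x,d) \<in> Xe" for h x d using that He by (auto simp: Xe_def)
qed

lemma V_univ: "span (NEG \<union> H \<union> POS) = UNIV"
proof -
  let ?V = "span (NEG \<union> H \<union> POS)"
  have NV: "NEG \<subseteq> ?V" and HV: "H \<subseteq> ?V" and PV: "POS \<subseteq> ?V" using span_superset[of "NEG \<union> H \<union> POS"] by blast+
  have gen1: "b y u \<in> ?V" if y: "y \<in> H \<union> range e \<union> range f" and u: "u \<in> NEG \<union> H \<union> POS" for y u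
  proof -
    consider (h) "y \<in> H" | (e) m where "y = e m" | (f) m where "y = f m" using y by blast
    then show ?thesis
    proof cases
      case h
      from u consider (n) "u \<in> NEG" | (hh) "u \<in> H" | (p) "u \<in> POS" by blast
      then show ?thesis
      proof cases
        case n then obtain d where "cld b f dgf Xf u d" by (auto simp: NEG_def cls_def)
        then obtain c where "b y u = s c u" using negH h by blast
        then show ?thesis using n NV by (simp add: span_scale subsetD)
      next
        case hh then show ?thesis using HH h by (simp add: span_zero)
      next
        case p then obtain d where "cld b e simple_root Xe u d" by (auto simp: POS_def cls_def)
        then obtain c where "b y u = s c u" using posH h by blast
        then show ?thesis using p PV by (simp add: span_scale subsetD)
      qed
    next
      case e
      from u consider (n) "u \<in> NEG" | (hh) "u \<in> H" | (p) "u \<in> POS" by blast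
      then show ?thesis
      proof cases
        case n then obtain d where "cld b f dgf Xf u d" by (auto simp: NEG_def cls_def)
        then have "b y u \<in> span (NEG \<union> H)" using e_neg e by blast
        moreover have "span (NEG \<union> H) \<subseteq> ?V" by (intro span_mono) auto
        ultimately show ?thesis by blast
      next
        case hh
        have "b y u = s (- xi m u) (e m)" using e hh by (subst anti) (simp add: He)
        moreover have "e m \<in> POS" unfolding POS_def cls_def Xe_def by (auto intro: cld.base)
        ultimately show ?thesis using PV by (simp add: span_scale span_neg subsetD)
      next
        case p then obtain d where "cld b e simple_root Xe u d" by (auto simp: POS_def cls_def)
        then have "cld b e simple_root Xe (b y u) (deg_add (simple_root m) d)" using e by (simp add: cld.step)
        then have "b y u \<in> POS" by (auto simp: POS_def cls_def)
        then show ?thesis using PV by blast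
      qed
    next
      case f
      from u consider (n) "u \<in> NEG" | (hh) "u \<in> H" | (p) "u \<in> POS" by blast
      then show ?thesis
      proof cases
        case p then obtain d where "cld b e simple_root Xe u d" by (auto simp: POS_def cls_def)
        then have "b y u \<in> span (POS \<union> H)" using f_pos f by blast
        moreover have "span (POS \<union> H) \<subseteq> ?V" by (intro span_mono) auto
        ultimately show ?thesis by blast
      next
        case hh
        have "b y u = s (xi m u) (f m)" using f hh by (subst anti) (simp add: Hf)
        moreover have "f m \<in> NEG" unfolding NEG_def cls_def Xf_def dgf_def by (auto intro: cld.base)
        ultimately show ?thesis using NV by (simp add: span_scale subsetD)
      next
        case n then obtain d where "cld b f dgf Xf u d" by (auto simp: NEG_def cls_def)
        then have "cld b f dgf Xf (b y u) (deg_add (dgf m) d)" using f by (simp add: cld.step)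
        then have "b y u \<in> NEG" by (auto simp: NEG_def cls_def)
        then show ?thesis using NV by blast
      qed
    qed
  qed
  have gen2: "b y w \<in> ?V" if "y \<in> H \<union> range e \<union> range f" "w \<in> ?V" for y w
    using span_adR[OF subspace_span, of "NEG \<union> H \<union> POS" y] gen1 that by blast
  have all: "b y w \<in> ?V" if "w \<in> ?V" for y w
    using ad_all[OF subspace_span gen2 that] by blast
  have "range e \<subseteq> ?V"
  proof
    fix x assume "x \<in> range e"
    then obtain m where "x = e m" by blast
    moreover have "e m \<in> POS" unfolding POS_def cls_def Xe_def by (auto intro: cld.base)
    ultimately show "x \<in> ?V" using PV by blast
  qed
  moreover have "range f \<subseteq> ?V"
  proof
    fix x assume "x \<in> range f"
    then obtain m where "x = f m" by blast
    moreover have "f m \<in> NEG" unfolding NEG_def cls_def Xf_def dgf_def by (auto intro: cld.base)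
    ultimately show "x \<in> ?V" using NV by blast
  qed
  moreover have "lie_closed b ?V" unfolding lie_closed_def using all by blast
  ultimately show ?thesis using gen[OF subspace_span _ HV] by blast
qed


lemma pos_deg: "cld b e simple_root Xe v \<delta> \<Longrightarrow> v \<in> G \<delta>"
  by (rule cld_deg[of Xe e simple_root]) (auto simp: Xe_def eG)

lemma neg_deg: "cld b f dgf Xf v \<delta> \<Longrightarrow> v \<in> G \<delta>"
  by (rule cld_deg[of Xf f dgf]) (auto simp: Xf_def fG dgf_def)

lemma neg_deg2: "cld b f dgf Xf v \<delta> \<Longrightarrow> \<delta> k \<le> 0"
  by (rule cld_prop[of Xf "\<lambda>d. \<forall>k. d k \<le> 0" dgf b f v \<delta>, rule_format])
    (auto simp: Xf_def dgf_def deg_smul_def deg_add_def simple_root_def, meson dual_order.trans zero_le_one)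

lemma root_span:
  assumes g0: "\<forall>k. \<gamma> k \<ge> 0" and gnz: "\<gamma> \<noteq> (\<lambda>_. 0)" and x: "x \<in> G \<gamma>"
  shows "x \<in> span {v. cld b e simple_root Xe v \<gamma>}"
proof -
  define P where "P = {v. cld b e simple_root Xe v \<gamma>}"
  define R where "R = NEG \<union> H \<union> {v. \<exists>\<delta>. \<delta> \<noteq> \<gamma> \<and> cld b e simple_root Xe v \<delta>}"
  have "NEG \<union> H \<union> POS \<subseteq> R \<union> P" unfolding R_def P_def POS_def cls_def by fastforce
  then have "x \<in> span (R \<union> P)" using V_univ span_mono by blast
  then obtain r q where rq: "x = r + q" "r \<in> span R" "q \<in> span P" by (auto simp: span_Un)
  have "P \<subseteq> G \<gamma>" unfolding P_def using pos_deg by blast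
  then have qG: "q \<in> G \<gamma>" using span_minimal[OF _ Gsub] rq(3) by blast
  have "r = x - q" using rq(1) by simp
  then have rG: "r \<in> G \<gamma>" using x qG subspace_diff[OF Gsub] by simp
  obtain k where k: "\<gamma> k > 0" using g0 gnz by (metis antisym_conv1 ext)
  have "R \<subseteq> (\<Union>\<delta>\<in>{\<delta>. \<delta> \<noteq> \<gamma>}. G \<delta>)"
  proof
    fix v assume "v \<in> R"
    then consider (n) "v \<in> NEG" | (h) "v \<in> H" | (p) \<delta> where "\<delta> \<noteq> \<gamma>" "cld b e simple_root Xe v \<delta>"
      unfolding R_def by blast
    then show "v \<in> (\<Union>\<delta>\<in>{\<delta>. \<delta> \<noteq> \<gamma>}. G \<delta>)"
    proof cases
      case n
      then obtain d where d: "cld b f dgf Xf v d" by (auto simp: NEG_def cls_def)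
      then have "d k \<le> 0" by (rule neg_deg2)
      then have "d \<noteq> \<gamma>" using k by auto
      then show ?thesis using neg_deg[OF d] by blast
    next
      case h
      have "(\<lambda>_. 0) \<noteq> \<gamma>" using gnz by auto
      then show ?thesis using h HG0 by blast
    next
      case p then show ?thesis using pos_deg by blast
    qed
  qed
  then have "r \<in> span (\<Union>\<delta>\<in>{\<delta>. \<delta> \<noteq> \<gamma>}. G \<delta>)" using rq(2) span_mono by blast
  then have "r = 0" using grade_zero[OF rG] by blast
  then show ?thesis using rq P_def by simp
qed


definition xs :: "'i \<Rightarrow> 'i \<Rightarrow> nat \<Rightarrow> 'g" where "xs i k n = (b (e i) ^^ n) (e k)"

lemma xs_0[simp]: "xs i k 0 = e k" by (simp add: xs_def)
lemma xs_Suc[simp]: "xs i k (Suc n) = b (e i) (xs i k n)" by (simp add: xs_def)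

lemma hx: "h \<in> H \<Longrightarrow> b h (xs i k n) = s (xi k h + of_nat n * xi i h) (xs i k n)"
proof (induct n)
  case 0 then show ?case by (simp add: He)
next
  case (Suc n)
  have "b h (xs i k (Suc n)) = b (b h (e i)) (xs i k n) + b (e i) (b h (xs i k n))"
    by (simp only: xs_Suc) (rule jac2)
  also have "\<dots> = s (xi k h + of_nat (Suc n) * xi i h) (xs i k (Suc n))"
    using Suc by (simp add: He scL scR algebra_simps flip: scale_left_distrib)
  finally show ?case .
qed

lemma fe_zero: "j \<noteq> m \<Longrightarrow> b (f j) (e m) = 0"
  by (subst anti) (simp add: ef)

lemma fx_other:
  assumes "j \<noteq> i" "k \<noteq> i"
  shows "b (f j) (xs i k (Suc (Suc n))) = 0"
proof -
  have step: "b (f j) (xs i k (Suc m)) = b (e i) (b (f j) (xs i k m))" for m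
    using jac2[of "f j" "e i" "xs i k m"] by (simp add: fe_zero[OF assms(1)])
  have "b (f j) (xs i k (Suc 0)) = (if j = k then s (A k i) (e i) else 0)"
  proof -
    have "b (f j) (xs i k (Suc 0)) = b (e i) (b (f j) (e k))" by (simp add: step[of 0, simplified])
    also have "\<dots> = (if j = k then b (e i) (- hh k) else 0)"
      by (subst anti) (simp add: ef negR)
    also have "b (e i) (- hh k) = s (A k i) (e i)"
      by (simp add: negR, subst anti) (simp add: He hhH xi_hh)
    finally show ?thesis by simp
  qed
  then have "b (f j) (xs i k (Suc (Suc 0))) = 0"
    by (simp only: step) (simp add: scR alt)
  then show ?thesis
    by (induct n) (simp_all only: step zeroR)
qed

fun dsum :: "'k \<Rightarrow> 'k \<Rightarrow> nat \<Rightarrow> 'k" where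
  "dsum a c 0 = 0"
| "dsum a c (Suc n) = dsum a c n + a + of_nat n * c"

lemma fx_i:
  assumes "k \<noteq> i"
  shows "b (f i) (xs i k (Suc n)) = s (- dsum (A i k) (A i i) (Suc n)) (xs i k n)"
proof (induct n)
  case 0
  have "b (f i) (xs i k (Suc 0)) = b (b (f i) (e i)) (e k) + b (e i) (b (f i) (e k))"
    by (simp only: xs_Suc xs_0) (rule jac2)
  also have "\<dots> = b (- hh i) (e k)"
    using assms by (subst (2) anti, subst anti) (simp add: fe_zero ef)
  also have "\<dots> = s (- A i k) (e k)" by (simp add: negL He hhH xi_hh)
  finally show ?case by simp
next
  case (Suc n)
  have "b (f i) (xs i k (Suc (Suc n))) = b (b (f i) (e i)) (xs i k (Suc n)) + b (e i) (b (f i) (xs i k (Suc n)))"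
    by (simp only: xs_Suc[of i k "Suc n"]) (rule jac2)
  also have "b (f i) (e i) = - hh i" by (subst anti) (simp add: ef)
  also have "b (- hh i) (xs i k (Suc n)) = s (- (A i k + of_nat (Suc n) * A i i)) (xs i k (Suc n))"
    by (simp only: negL hx[OF hhH] xi_hh scale_minus_left)
  also have "b (e i) (b (f i) (xs i k (Suc n))) = s (- dsum (A i k) (A i i) (Suc n)) (xs i k (Suc n))"
    using Suc by (simp add: scR)
  finally show ?case by (simp add: algebra_simps flip: scale_left_distrib)
qed


lemma dsum0: "dsum a 0 n = of_nat n * a"
  by (induct n) (simp_all add: algebra_simps)
lemma dsum2: "dsum a 2 n = of_nat n * a + of_nat n * (of_nat n - 1)"
  by (induct n) (simp_all add: algebra_simps)

lemma dsum_char: "c = 0 \<or> c = 2 \<Longrightarrow> dsum a c CHAR('k) = 0"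
  by (auto simp: dsum0 dsum2)

definition xdeg :: "'i \<Rightarrow> 'i \<Rightarrow> nat \<Rightarrow> 'i \<Rightarrow> int" where
  "xdeg i k n = deg_add (simple_root k) (deg_smul (int n) (simple_root i))"

lemma xdeg_Suc: "xdeg i k (Suc n) = deg_add (simple_root i) (xdeg i k n)"
  by (auto simp: xdeg_def deg_add_def deg_smul_def simple_root_def algebra_simps)

lemma xs_cld: "cld b e simple_root Xe (xs i k n) (xdeg i k n)"
proof (induct n)
  case 0
  have "xdeg i k 0 = simple_root k" by (auto simp: xdeg_def deg_add_def deg_smul_def)
  then show ?case by (auto simp: Xe_def intro: cld.base)
next
  case (Suc n) then show ?case by (simp add: xdeg_Suc cld.step)
qed

lemma xp_zero:
  assumes ki: "k \<noteq> i" and p2: "2 \<le> p" and dp: "dsum (A i k) (A i i) p = 0"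
  shows "xs i k p = 0"
proof -
  obtain m where pm: "p = Suc (Suc m)" using p2 by (metis add_2_eq_Suc le_Suc_ex)
  let ?xp = "xs i k p"
  have fk: "b (f j) ?xp = 0" for j
  proof (cases "j = i")
    case True
    have "b (f i) (xs i k (Suc (Suc m))) = s (- dsum (A i k) (A i i) (Suc (Suc m))) (xs i k (Suc m))"
      by (rule fx_i[OF ki])
    then show ?thesis using True dp pm by (simp del: dsum.simps)
  next
    case False then show ?thesis using fx_other[OF False ki] pm by simp
  qed
  define X0 where "X0 = {(?xp, xdeg i k p)}"
  define Y where "Y = cls b e simple_root X0"
  define I where "I = span Y"
  have xpG: "?xp \<in> G (xdeg i k p)" by (rule pos_deg[OF xs_cld])
  have Ydeg: "u \<in> G d" if "cld b e simple_root X0 u d" for u d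
    by (rule cld_deg[OF _ _ that]) (auto simp: X0_def xpG eG)
  have Ydeg2: "d k \<ge> 1" if "cld b e simple_root X0 u d" for u d
    by (rule cld_prop[of X0 "\<lambda>d. d k \<ge> 1" simple_root b e u d, OF _ _ that])
      (auto simp: X0_def xdeg_def deg_add_def deg_smul_def simple_root_def ki)
  have gen': "b y w \<in> I" if y: "y \<in> H \<union> range e \<union> range f" and w: "w \<in> I" for y w
    unfolding I_def
  proof (rule span_adR[OF subspace_span _ w[unfolded I_def]])
    fix u assume "u \<in> Y"
    then obtain d where u: "cld b e simple_root X0 u d" by (auto simp: Y_def cls_def)
    consider (h) "y \<in> H" | (e) m where "y = e m" | (f) m where "y = f m" using y by blast
    then show "b y u \<in> span Y"
    proof cases
      case h
      have "\<exists>c. b y u = s c u"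
      proof (rule G1[OF _ _ u])
        show "\<exists>c. b y (e n) = s c (e n)" for n using He[OF h] by blast
        show "\<exists>c. b y x = s c x" if "(x,\<delta>) \<in> X0" for x \<delta> using that hx[OF h] by (auto simp: X0_def)
      qed
      then obtain c where "b y u = s c u" by blast
      moreover have "u \<in> Y" using u by (auto simp: Y_def cls_def)
      ultimately show ?thesis by (simp add: span_base span_scale)
    next
      case e
      have "cld b e simple_root X0 (b (e m) u) (deg_add (simple_root m) d)" using u by (rule cld.step)
      then show ?thesis using e by (intro span_base) (auto simp: Y_def cls_def)
    next
      case f
      have "b (f m) u \<in> span (cls b e simple_root X0 \<union> {})"
      proof (rule G2[OF Hsub, of X0 f e simple_root "{}"])
        show "b (f m') x \<in> span (cls b e simple_root X0 \<union> {})" if "(x,\<delta>) \<in> X0" for x \<delta> m'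
          using that fk by (auto simp: X0_def span_zero)
        show "b (e n) z \<in> span (cls b e simple_root X0 \<union> {})" if "z \<in> {}" for n z using that by simp
        show "b (f m') (e n) \<in> H" for m' n by (rule fe_H)
        show "\<exists>c. b h (e n) = s c (e n)" if "h \<in> H" for h n using He[OF that] by blast
        show "\<exists>c. b h x = s c x" if "h \<in> H" "(x,\<delta>) \<in> X0" for h x \<delta>
          using that hx[OF that(1)] by (auto simp: X0_def)
        show "cld b e simple_root X0 u d" by (rule u)
      qed
      then show ?thesis using f by (simp add: Y_def)
    qed
  qed
  have idl: "b y w \<in> I" if "w \<in> I" for y w
    using ad_all[OF _ gen' that] by (simp add: I_def)
  have YG: "Y \<subseteq> (\<Union>\<beta>. I \<inter> G \<beta>)"
  proof
    fix u assume "u \<in> Y"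
    then obtain d where "cld b e simple_root X0 u d" by (auto simp: Y_def cls_def)
    then have "u \<in> G d" by (rule Ydeg)
    moreover have "u \<in> I" using \<open>u \<in> Y\<close> by (simp add: I_def span_base)
    ultimately show "u \<in> (\<Union>\<beta>. I \<inter> G \<beta>)" by blast
  qed
  have "graded_ideal s b G I"
    unfolding graded_ideal_def
  proof (intro conjI allI impI)
    show "subspace I" by (simp add: I_def)
    show "b x y \<in> I" if "y \<in> I" for x y using idl that by blast
    show "I \<subseteq> span (\<Union>\<beta>. I \<inter> G \<beta>)" unfolding I_def using span_mono[OF YG] by (simp add: I_def)
  qed
  moreover have "I \<inter> H = {0}"
  proof
    have YP: "Y \<subseteq> (\<Union>\<delta>\<in>{d. d k \<ge> 1}. G \<delta>)"
    proof
      fix u assume "u \<in> Y"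
      then obtain d where "cld b e simple_root X0 u d" by (auto simp: Y_def cls_def)
      then show "u \<in> (\<Union>\<delta>\<in>{d. d k \<ge> 1}. G \<delta>)" using Ydeg Ydeg2 by blast
    qed
    show "I \<inter> H \<subseteq> {0}"
    proof
      fix y assume "y \<in> I \<inter> H"
      then have "y \<in> G (\<lambda>_. 0)" "y \<in> span (\<Union>\<delta>\<in>{d. d k \<ge> 1}. G \<delta>)"
        using HG0 span_mono[OF YP] by (auto simp: I_def)
      then have "y = 0" by (rule grade_zero) simp
      then show "y \<in> {0}" by simp
    qed
    show "{0} \<subseteq> I \<inter> H" by (simp add: I_def span_zero subspace_0[OF Hsub])
  qed
  ultimately have "I = {0}" by (rule maxideal)
  moreover have "?xp \<in> I" unfolding I_def Y_def cls_def X0_def by (auto intro!: span_base cld.base)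
  ultimately show ?thesis by simp
qed


lemma pos_nonneg: "cld b e simple_root Xe v \<delta> \<Longrightarrow> \<delta> t \<ge> 0"
  by (rule cld_prop[of Xe "\<lambda>d. \<forall>t. d t \<ge> 0" simple_root b e v \<delta>, rule_format])
    (auto simp: Xe_def deg_add_def simple_root_def)

lemma two_inv:
  assumes ki: "k \<noteq> i"
  shows "cld b e simple_root Xe v \<delta> \<Longrightarrow> (\<forall>t. t \<noteq> i \<and> t \<noteq> k \<longrightarrow> \<delta> t = 0) \<Longrightarrow>
    (\<delta> k = 0 \<and> ((v = e i \<and> \<delta> = simple_root i) \<or> v = 0))
    \<or> (\<delta> k = 1 \<and> (\<exists>c. v = s c (xs i k (nat (\<delta> i))))) \<or> \<delta> k \<ge> 2"
proof (induct rule: cld.induct)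
  case (base x d)
  from base(1) obtain m where xm: "x = e m" "d = simple_root m" by (auto simp: Xe_def)
  have "m = i \<or> m = k"
  proof (rule ccontr)
    assume "\<not> (m = i \<or> m = k)"
    then have "d m = 0" using base(2) by blast
    then show False using xm by (simp add: simple_root_def)
  qed
  then show ?case
  proof
    assume mi: "m = i"
    have "d k = 0" using xm mi ki by (simp add: simple_root_def)
    moreover have "x = e i \<and> d = simple_root i" using xm mi by simp
    ultimately show ?thesis by blast
  next
    assume mk: "m = k"
    have "d k = 1" "d i = 0" using xm mk ki by (simp_all add: simple_root_def)
    then have "x = s 1 (xs i k (nat (d i)))" using xm mk by simp
    then show ?thesis using \<open>d k = 1\<close> by blast
  qed
next
  case (step v \<delta> m)
  let ?d = "deg_add (simple_root m) \<delta>"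
  have nn: "\<delta> t \<ge> 0" for t using pos_nonneg[OF step(1)] .
  have mik: "m = i \<or> m = k"
  proof (rule ccontr)
    assume "\<not> (m = i \<or> m = k)"
    then have "?d m = 0" using step(3) by blast
    then show False using nn[of m] by (simp add: simple_root_def deg_add_def)
  qed
  have supp: "\<forall>t. t \<noteq> i \<and> t \<noteq> k \<longrightarrow> \<delta> t = 0"
  proof (intro allI impI)
    fix t assume t: "t \<noteq> i \<and> t \<noteq> k"
    then have "?d t = 0" using step(3) by blast
    moreover have "t \<noteq> m" using t mik by auto
    ultimately show "\<delta> t = 0" by (simp add: simple_root_def deg_add_def)
  qed
  have IH: "(\<delta> k = 0 \<and> ((v = e i \<and> \<delta> = simple_root i) \<or> v = 0))
    \<or> (\<delta> k = 1 \<and> (\<exists>c. v = s c (xs i k (nat (\<delta> i))))) \<or> \<delta> k \<ge> 2"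
    using step(2) supp by blast
  from mik show ?case
  proof
    assume mi: "m = i"
    have dk: "?d k = \<delta> k" and di: "?d i = \<delta> i + 1" using mi ki by (auto simp: deg_add_def simple_root_def)
    from IH consider (a) "\<delta> k = 0" "v = e i" | (z) "\<delta> k = 0" "v = 0"
      | (o) c where "\<delta> k = 1" "v = s c (xs i k (nat (\<delta> i)))" | (t) "\<delta> k \<ge> 2" by blast
    then show ?thesis
    proof cases
      case a
      have "b (e m) v = 0" using a mi by (simp add: alt)
      moreover have "?d k = 0" using dk a by simp
      ultimately show ?thesis by blast
    next
      case z
      have "b (e m) v = 0" using z by simp
      moreover have "?d k = 0" using dk z by simp
      ultimately show ?thesis by blast
    next
      case o
      have "nat (?d i) = Suc (nat (\<delta> i))" using di nn[of i] by simp
      then have "b (e m) v = s c (xs i k (nat (?d i)))" using o mi by (simp add: scR)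
      moreover have "?d k = 1" using dk o by simp
      ultimately show ?thesis by blast
    next
      case t
      then have "?d k \<ge> 2" using dk by simp
      then show ?thesis by blast
    qed
  next
    assume mk: "m = k"
    have dk: "?d k = \<delta> k + 1" and di: "?d i = \<delta> i" using mk ki by (auto simp: deg_add_def simple_root_def)
    from IH consider (a) "\<delta> k = 0" "v = e i" "\<delta> = simple_root i" | (z) "\<delta> k = 0" "v = 0"
      | (ge) "\<delta> k \<ge> 1" by force
    then show ?thesis
    proof cases
      case a
      have "nat (?d i) = 1" using di a by (simp add: simple_root_def)
      moreover have "b (e m) v = s (-1) (xs i k 1)" using a mk by (simp add: anti[of "e k"])
      moreover have "?d k = 1" using dk a by simp
      ultimately show ?thesis by (metis (no_types))
    next
      case z
      have "b (e m) v = s 0 (xs i k (nat (?d i)))" using z by simp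
      moreover have "?d k = 1" using dk z by simp
      ultimately show ?thesis by (metis (no_types))
    next
      case ge
      then have "?d k \<ge> 2" using dk by simp
      then show ?thesis by blast
    qed
  qed
qed

lemma top_zero:
  assumes ki: "k \<noteq> i" and p2: "2 \<le> p" and dp: "dsum (A i k) (A i i) p = 0"
  shows "G (xdeg i k p) = {0}"
proof -
  have supp: "\<forall>t. t \<noteq> i \<and> t \<noteq> k \<longrightarrow> xdeg i k p t = 0"
    by (auto simp: xdeg_def deg_add_def deg_smul_def simple_root_def)
  have dk: "xdeg i k p k = 1" and di: "xdeg i k p i = int p"
    using ki by (auto simp: xdeg_def deg_add_def deg_smul_def simple_root_def)
  have "{v. cld b e simple_root Xe v (xdeg i k p)} \<subseteq> {0}"
  proof
    fix v assume "v \<in> {v. cld b e simple_root Xe v (xdeg i k p)}"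
    then have "cld b e simple_root Xe v (xdeg i k p)" by simp
    from two_inv[OF ki this supp] dk di obtain c where "v = s c (xs i k p)" by auto
    then show "v \<in> {0}" using xp_zero[OF ki p2 dp] by simp
  qed
  then have sp: "span {v. cld b e simple_root Xe v (xdeg i k p)} \<subseteq> {0}"
    using span_minimal[OF _ subspace_single_0] by blast
  have nn: "\<forall>t. xdeg i k p t \<ge> 0" by (auto simp: xdeg_def deg_add_def deg_smul_def simple_root_def)
  have nz: "xdeg i k p \<noteq> (\<lambda>_. 0)" using dk by auto
  show ?thesis
    using root_span[OF nn nz] sp subspace_0[OF Gsub] by blast
qed


lemma e_nz: "e k \<noteq> 0"
proof
  assume "e k = 0"
  then have "b (e k) (f k) = 0" by simp
  then show False using ef[of k k] hh_nz[of k] by simp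
qed

lemma string_exists:
  assumes ki: "k \<noteq> i" and p2: "2 \<le> p" and dp: "dsum (A i k) (A i i) p = 0"
  shows "\<exists>l \<in> {1..p}. simple_root k \<in> string_gen G i l"
proof -
  define R where "R n \<longleftrightarrow> deg_add (simple_root k) (deg_smul (int n) (simple_root i)) \<in> pos_roots G" for n
  have Rx: "R n \<longleftrightarrow> xdeg i k n \<in> pos_roots G" for n by (simp add: R_def xdeg_def)
  have nRp: "\<not> R p" using top_zero[OF ki p2 dp] by (simp add: Rx pos_roots_def)
  have x0: "xdeg i k 0 = simple_root k" by (auto simp: xdeg_def deg_add_def deg_smul_def)
  have R0: "R 0"
  proof -
    have "G (simple_root k) \<noteq> {0}" using eG[of k] e_nz[of k] by blast
    moreover have "simple_root k \<noteq> (\<lambda>_. 0)" by (metis simple_root_def zero_neq_one)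
    ultimately show ?thesis by (simp add: Rx x0 pos_roots_def simple_root_def)
  qed
  define l where "l = (LEAST n. \<not> R n)"
  have nRl: "\<not> R l" unfolding l_def using nRp by (rule LeastI)
  have lp: "l \<le> p" unfolding l_def using nRp by (rule Least_le)
  have Rlt: "R n" if "n < l" for n using not_less_Least[OF that[unfolded l_def]] by blast
  have l1: "l \<ge> 1" using nRl R0 by (cases l) auto
  have "simple_root k \<in> string_gen G i l"
    unfolding string_gen_def
  proof (intro CollectI conjI allI impI)
    show "simple_root k \<noteq> simple_root i" using ki by (metis simple_root_def zero_neq_one)
    show "deg_add (simple_root k) (deg_smul (int n) (simple_root i)) \<in> pos_roots G" if "n < l" for n
      using Rlt[OF that] by (simp add: R_def)
    show "deg_add (simple_root k) (deg_smul (-1) (simple_root i)) \<notin> pos_roots G"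
      by (auto simp: pos_roots_def deg_add_def deg_smul_def simple_root_def ki dest!: spec[of _ i])
    show "deg_add (simple_root k) (deg_smul (int l) (simple_root i)) \<notin> pos_roots G"
      using nRl by (simp add: R_def)
  qed
  then show ?thesis using lp l1 by auto
qed

lemma main:
  assumes p2: "2 \<le> p" and dp: "\<And>k. k \<noteq> i \<Longrightarrow> dsum (A i k) (A i i) p = 0"
    and j1: "1 \<le> j" and \<beta>: "\<beta> \<in> string_gen G i j"
  shows "M_sub s G i \<beta> j \<subseteq>
     rep_subalg_gen s b (e i)
       (\<Union>{M_sub s G i (simple_root k) l | k l. k \<noteq> i \<and> l \<in> {1..p} \<and> simple_root k \<in> string_gen G i l})"
  unfolding rep_subalg_gen_def
proof (rule Inter_greatest)
  fix S assume "S \<in> {S. S \<subseteq> derived_alg s b \<and> subspace S \<and> lie_closed b S \<and> (\<forall>x\<in>S. b (e i) x \<in> S) \<and>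
     \<Union>{M_sub s G i (simple_root k) l | k l. k \<noteq> i \<and> l \<in> {1..p} \<and> simple_root k \<in> string_gen G i l} \<subseteq> S}"
  then have sS: "subspace S" and lS: "lie_closed b S" and adS: "\<And>x. x \<in> S \<Longrightarrow> b (e i) x \<in> S"
    and XS: "\<Union>{M_sub s G i (simple_root k) l | k l. k \<noteq> i \<and> l \<in> {1..p} \<and> simple_root k \<in> string_gen G i l} \<subseteq> S"
    by auto
  have em: "e m \<in> S" if mi: "m \<noteq> i" for m
  proof -
    obtain l where l: "l \<in> {1..p}" "simple_root m \<in> string_gen G i l"
      using string_exists[OF mi p2 dp[OF mi]] by blast
    have "deg_add (simple_root m) (deg_smul (int 0) (simple_root i)) = simple_root m"
      by (auto simp: deg_add_def deg_smul_def)
    then have "G (simple_root m) \<subseteq> (\<Union>n<l. G (deg_add (simple_root m) (deg_smul (int n) (simple_root i))))"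
      using l(1) by (intro UN_upper[of 0, THEN subset_trans[rotated]]) auto
    then have "e m \<in> M_sub s G i (simple_root m) l"
      unfolding M_sub_def using eG[of m] span_superset by blast
    then show ?thesis using XS l mi by blast
  qed
  have inv: "v \<in> S \<or> (v = e i \<and> \<delta> = simple_root i)" if "cld b e simple_root Xe v \<delta>" for v \<delta>
    using that
  proof (induct rule: cld.induct)
    case (base x d)
    then obtain m where "x = e m" "d = simple_root m" by (auto simp: Xe_def)
    then show ?case using em by (cases "m = i") auto
  next
    case (step v \<delta> m)
    show ?case
    proof (cases "v \<in> S")
      case True
      then show ?thesis
        using adS em lS unfolding lie_closed_def by (cases "m = i") auto
    next
      case False
      then have v: "v = e i" using step by blast
      show ?thesis
      proof (cases "m = i")
        case True then show ?thesis using v alt subspace_0[OF sS] by simp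
      next
        case False
        have "b (e m) v = - b (e i) (e m)" using v by (subst anti) simp
        then show ?thesis using subspace_neg[OF sS adS[OF em[OF False]]] by simp
      qed
    qed
  qed
  have GS: "G \<gamma> \<subseteq> S" if g0: "\<forall>t. \<gamma> t \<ge> 0" and gnz: "\<gamma> \<noteq> (\<lambda>_. 0)" and gi: "\<gamma> \<noteq> simple_root i" for \<gamma>
  proof
    fix x assume "x \<in> G \<gamma>"
    then have "x \<in> span {v. cld b e simple_root Xe v \<gamma>}" by (rule root_span[OF g0 gnz])
    moreover have "{v. cld b e simple_root Xe v \<gamma>} \<subseteq> S" using inv gi by blast
    ultimately show "x \<in> S" using span_minimal[OF _ sS] by blast
  qed
  have \<beta>p: "\<beta> \<in> pos_roots G" and \<beta>i: "\<beta> \<noteq> simple_root i"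
    and \<beta>n: "\<And>n. n < j \<Longrightarrow> deg_add \<beta> (deg_smul (int n) (simple_root i)) \<in> pos_roots G"
  proof -
    show "\<beta> \<noteq> simple_root i" using \<beta> by (simp add: string_gen_def)
    show *: "deg_add \<beta> (deg_smul (int n) (simple_root i)) \<in> pos_roots G" if "n < j" for n
      using \<beta> that by (simp add: string_gen_def)
    have "deg_add \<beta> (deg_smul (int 0) (simple_root i)) = \<beta>" by (auto simp: deg_add_def deg_smul_def)
    then show "\<beta> \<in> pos_roots G" using *[of 0] j1 by simp
  qed
  have "(\<Union>n<j. G (deg_add \<beta> (deg_smul (int n) (simple_root i)))) \<subseteq> S"
  proof (intro UN_least)
    fix n assume n: "n \<in> {..<j}"
    let ?g = "deg_add \<beta> (deg_smul (int n) (simple_root i))"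
    have gp: "?g \<in> pos_roots G" using \<beta>n n by simp
    have "?g \<noteq> simple_root i"
    proof
      assume eq: "?g = simple_root i"
      show False
      proof (cases n)
        case 0
        then have "?g = \<beta>" by (auto simp: deg_add_def deg_smul_def)
        then show False using eq \<beta>i by simp
      next
        case (Suc n')
        have b0: "\<forall>t. \<beta> t \<ge> 0" "\<beta> \<noteq> (\<lambda>_. 0)" using \<beta>p by (auto simp: pos_roots_def)
        have "\<beta> t = 0" for t
        proof (cases "t = i")
          case True
          have "?g i = 1" using eq by (simp add: simple_root_def)
          then have "\<beta> i + int n = 1" by (simp add: deg_add_def deg_smul_def simple_root_def)
          then show ?thesis using True b0(1) Suc by (metis add_le_same_cancel1 of_nat_Suc antisym_conv2
              linorder_not_le of_nat_0_le_iff zless_imp_add1_zle add.commute le_add_same_cancel2 of_nat_le_0_iff Zero_neq_Suc)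
        next
          case False
          have "?g t = 0" using eq False by (simp add: simple_root_def)
          then show ?thesis using False by (simp add: deg_add_def deg_smul_def simple_root_def)
        qed
        then show False using b0(2) by auto
      qed
    qed
    then show "G ?g \<subseteq> S" using GS gp by (auto simp: pos_roots_def)
  qed
  then show "M_sub s G i \<beta> j \<subseteq> S" unfolding M_sub_def using span_minimal[OF _ sS] by blast
qed

end

theorem proposition4p8:
  fixes A :: "'i::finite \<Rightarrow> 'i \<Rightarrow> 'k::field"
    and s :: "'k \<Rightarrow> 'g::ab_group_add \<Rightarrow> 'g" and b :: "'g \<Rightarrow> 'g \<Rightarrow> 'g"
    and H :: "'g set" and hh :: "'i \<Rightarrow> 'g" and xi :: "'i \<Rightarrow> 'g \<Rightarrow> 'k"
    and e f :: "'i \<Rightarrow> 'g" and G :: "('i \<Rightarrow> int) \<Rightarrow> 'g set"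
    and p :: nat and i :: 'i and j :: nat and \<beta> :: "'i \<Rightarrow> int"
  assumes "alg_closed_field TYPE('k)"
    and "prime p" and "CHAR('k) = p"
    and "admissible_matrix A"
    and "is_contragredient A s b H hh xi e f G"
    and "fin_dim s"
    and "j \<in> {1..p}"
    and "\<beta> \<in> string_gen G i j"
  shows "M_sub s G i \<beta> j \<subseteq>
     rep_subalg_gen s b (e i)
       (\<Union>{M_sub s G i (simple_root k) l | k l. k \<noteq> i \<and> l \<in> {1..p} \<and> simple_root k \<in> string_gen G i l})"
proof -
  have la: "lie_algebra s b" using assms(5)[unfolded is_contragredient_def, THEN conjunct1] .
  have vs: "vector_space s" using la[unfolded lie_algebra_def, THEN conjunct1] .
  interpret c: contra s b A H hh xi e f G
    by (intro contra.intro lie.intro contra_axioms.intro lie_axioms.intro vs la assms(5))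
  have p2: "2 \<le> p" using prime_ge_2_nat assms(2) by blast
  have dp: "c.dsum (A i k) (A i i) p = 0" if "k \<noteq> i" for k
    using c.dsum_char[of "A i i" "A i k"] assms(3,4) by (simp add: admissible_matrix_def)
  have j1: "1 \<le> j" using assms(7) by simp
  show ?thesis by (rule c.main[OF p2 dp j1 assms(8)])
qed

end
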